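(* Let $(S,+,\le)$ be a commutative partially ordered semigroup (addition monotone in each variable) in which every non-empty subset has an infimum and a supremum. Let $\mathcal X_0=\{0,\dots,\ell\}$ and $\mathcal X_1$ be totally ordered sets and $\mathcal X_2=\mathbb R$. Let $\Phi$ be a root system in a real vector space $V$, $\Psi=\Phi\cup\{0\}$, $\Phi^0\subseteq\dots\subseteq\Phi^\ell=\Phi$ closed subsystems, $\Psi^j=\Phi^j\cup\{0\}$, and $\lambda\in V^*$. For triply indexed vectors $\tau=(t_{vij})$, $\tau'=(t'_{vij})$ ($v\in\mathcal X_2$, $i\in\mathcal X_1$, $j\in\mathcal X_0$) define $f_\tau\colon\Psi\to S$ by $f_\tau(\alpha)=\sup\{t_{v_\alpha ij_\alpha}:i\in\mathcal X_1\}$, where $v_\alpha=\langle\alpha,\lambda\rangle$ and $j_\alpha$ is the least $j$ with $\alpha\in\Psi^j$. Then: (1) if $\tau$ is concave, $f_\tau$ is concave, i.e. $f_\tau(\sum_i a_i)\le\sum_i f_\tau(a_i)$ for every non-empty finite family $(a_i)$ in $\Psi$ with $\sum_ia_i\in\Psi$; (2) $f_{\tau\vee\tau'}\le f_\tau\bowtie f_{\tau'}$; (3) if $\tau$ is concave, $f_{\tau\vee\tau'}\le f_\tau\rtimes f_{\tau'}$; (4) if $\tau$ and $\tau'$ are concave, $f_{\tau\vee\tau'}\le f_\tau\curlyvee f_{\tau'}$.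
   Context: Operations on indexed vectors (all infima componentwise). Singly indexed vectors $\vec a\in S^{\mathcal X_0}$: $(\vec a\vee_1\vec b)_j=\inf\{a_{j_1}+b_{j_2}: j\le j_1=j_2,\text{ or } j_2\le j=j_1,\text{ or } j_1\le j_2=j\}$. Doubly indexed vectors $A=(\vec a_i)_{i\in\mathcal X_1}$: $(A\vee_2B)_i=\inf\{\vec a_{i_1}\vee_1\vec b_{i_2}: i\ge i_1=i_2,\text{ or } i_2\ge i=i_1,\text{ or } i_1\ge i_2=i\}$ (note the reversed order on $\mathcal X_1$). Triply indexed vectors $\rho=(A_v)_{v\in\mathbb R}$, $\sigma=(B_v)$: $(\rho\vee\sigma)_v=\inf\{A_{v_1}\vee_2B_{v_2}:v_1+v_2=v\}$. $\tau$ is concave if $\tau\le\tau\vee\tau$ componentwise. For functions $f,f'\colon\Psi\to S$ and $\alpha\in\Psi$ (sums ranging over elements of $\Psi$, families non-empty): $(f\bowtie f')(\alpha)=\inf_{a+a'=\alpha}f(a)+f'(a')$; $(f\rtimes f')(\alpha)=\inf_{\sum_ia_i+a'=\alpha}\sum_if(a_i)+f'(a')$; $(f\curlyvee f')(\alpha)=\inf_{\sum_ia_i+\sum_ja'_j=\alpha}\sum_if(a_i)+\sum_jf'(a'_j)$. Inequalities between functions are pointwise. *)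

theory Defs
  imports "HOL-Analysis.Analysis"
begin

section \<open>Root systems (Bourbaki, not necessarily reduced)\<close>

definition root_system :: "'v::real_vector set \<Rightarrow> bool" where
  "root_system \<Phi> \<longleftrightarrow> finite \<Phi> \<and> 0 \<notin> \<Phi> \<and> span \<Phi> = UNIV \<and>
     (\<forall>\<alpha>\<in>\<Phi>. \<exists>c :: 'v \<Rightarrow> real. linear c \<and> c \<alpha> = 2 \<and>
        (\<forall>\<beta>\<in>\<Phi>. \<beta> - c \<beta> *\<^sub>R \<alpha> \<in> \<Phi>) \<and> (\<forall>\<beta>\<in>\<Phi>. c \<beta> \<in> \<int>))"

definition closed_subsystem :: "'v::real_vector set \<Rightarrow> 'v set \<Rightarrow> bool" where
  "closed_subsystem \<Phi> \<Phi>' \<longleftrightarrow> \<Phi>' \<subseteq> \<Phi> \<and> (\<forall>\<alpha>\<in>\<Phi>'. - \<alpha> \<in> \<Phi>') \<and>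
     (\<forall>\<alpha>\<in>\<Phi>'. \<forall>\<beta>\<in>\<Phi>'. \<alpha> + \<beta> \<in> \<Phi> \<longrightarrow> \<alpha> + \<beta> \<in> \<Phi>')"

fun nesum :: "'a::ab_semigroup_add list \<Rightarrow> 'a" where
  "nesum [x] = x"
| "nesum (x # y # xs) = x + nesum (y # xs)"

text \<open>Singly indexed vectors: indices X0 = {0..l}, encoded as nat.\<close>
definition vee1 :: "nat \<Rightarrow> (nat \<Rightarrow> 's::{complete_lattice,ab_semigroup_add}) \<Rightarrow> (nat \<Rightarrow> 's) \<Rightarrow> nat \<Rightarrow> 's" where
  "vee1 l a b j = Inf {a j1 + b j2 | j1 j2. j1 \<le> l \<and> j2 \<le> l \<and>
      ((j \<le> j1 \<and> j1 = j2) \<or> (j2 \<le> j \<and> j = j1) \<or> (j1 \<le> j2 \<and> j2 = j))}"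

text \<open>Doubly indexed vectors (reversed order on the second index set).\<close>
definition vee2 :: "nat \<Rightarrow> ('i::linorder \<Rightarrow> nat \<Rightarrow> 's::{complete_lattice,ab_semigroup_add})
     \<Rightarrow> ('i \<Rightarrow> nat \<Rightarrow> 's) \<Rightarrow> 'i \<Rightarrow> nat \<Rightarrow> 's" where
  "vee2 l A B i = Inf {vee1 l (A i1) (B i2) | i1 i2.
      (i \<ge> i1 \<and> i1 = i2) \<or> (i2 \<ge> i \<and> i = i1) \<or> (i1 \<ge> i2 \<and> i2 = i)}"

definition vee3 :: "nat \<Rightarrow> (real \<Rightarrow> 'i::linorder \<Rightarrow> nat \<Rightarrow> 's::{complete_lattice,ab_semigroup_add})
     \<Rightarrow> (real \<Rightarrow> 'i \<Rightarrow> nat \<Rightarrow> 's) \<Rightarrow> real \<Rightarrow> 'i \<Rightarrow> nat \<Rightarrow> 's" where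
  "vee3 l \<rho> \<sigma> v = Inf {vee2 l (\<rho> v1) (\<sigma> v2) | v1 v2. v1 + v2 = v}"

definition concave3 :: "nat \<Rightarrow> (real \<Rightarrow> 'i::linorder \<Rightarrow> nat \<Rightarrow> 's::{complete_lattice,ab_semigroup_add}) \<Rightarrow> bool" where
  "concave3 l \<tau> \<longleftrightarrow> (\<forall>v i j. j \<le> l \<longrightarrow> \<tau> v i j \<le> vee3 l \<tau> \<tau> v i j)"

definition f_tau :: "nat \<Rightarrow> (nat \<Rightarrow> 'v::real_vector set) \<Rightarrow> ('v \<Rightarrow> real)
     \<Rightarrow> (real \<Rightarrow> 'i \<Rightarrow> nat \<Rightarrow> 's::complete_lattice) \<Rightarrow> 'v \<Rightarrow> 's" where
  "f_tau l Phis lam \<tau> \<alpha> = (SUP i. \<tau> (lam \<alpha>) i (LEAST j. \<alpha> \<in> Phis j \<union> {0}))"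

definition concave_fun :: "'v::real_vector set \<Rightarrow> ('v \<Rightarrow> 's::{order,ab_semigroup_add}) \<Rightarrow> bool" where
  "concave_fun \<Psi> f \<longleftrightarrow> (\<forall>as. as \<noteq> [] \<longrightarrow> set as \<subseteq> \<Psi> \<longrightarrow> sum_list as \<in> \<Psi> \<longrightarrow>
      f (sum_list as) \<le> nesum (map f as))"

definition bowtie :: "'v::real_vector set \<Rightarrow> ('v \<Rightarrow> 's::{complete_lattice,ab_semigroup_add})
     \<Rightarrow> ('v \<Rightarrow> 's) \<Rightarrow> 'v \<Rightarrow> 's" where
  "bowtie \<Psi> f f' \<alpha> = Inf {f a + f' a' | a a'. a \<in> \<Psi> \<and> a' \<in> \<Psi> \<and> a + a' = \<alpha>}"

definition rtimes :: "'v::real_vector set \<Rightarrow> ('v \<Rightarrow> 's::{complete_lattice,ab_semigroup_add})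
     \<Rightarrow> ('v \<Rightarrow> 's) \<Rightarrow> 'v \<Rightarrow> 's" where
  "rtimes \<Psi> f f' \<alpha> = Inf {nesum (map f as) + f' a' | as a'.
      as \<noteq> [] \<and> set as \<subseteq> \<Psi> \<and> a' \<in> \<Psi> \<and> sum_list as + a' = \<alpha>}"

definition curlyvee :: "'v::real_vector set \<Rightarrow> ('v \<Rightarrow> 's::{complete_lattice,ab_semigroup_add})
     \<Rightarrow> ('v \<Rightarrow> 's) \<Rightarrow> 'v \<Rightarrow> 's" where
  "curlyvee \<Psi> f f' \<alpha> = Inf {nesum (map f as) + nesum (map f' bs) | as bs.
      as \<noteq> [] \<and> bs \<noteq> [] \<and> set as \<subseteq> \<Psi> \<and> set bs \<subseteq> \<Psi> \<and> sum_list as + sum_list bs = \<alpha>}"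

end

theory Submission
  imports Defs
begin


definition cor :: "'v::real_vector set \<Rightarrow> 'v \<Rightarrow> 'v \<Rightarrow> real" where
  "cor \<Phi> \<alpha> = (SOME c. linear c \<and> c \<alpha> = 2 \<and> (\<forall>\<beta>\<in>\<Phi>. \<beta> - c \<beta> *\<^sub>R \<alpha> \<in> \<Phi>) \<and> (\<forall>\<beta>\<in>\<Phi>. c \<beta> \<in> \<int>))"

definition rfl :: "'v::real_vector set \<Rightarrow> 'v \<Rightarrow> 'v \<Rightarrow> 'v" where
  "rfl \<Phi> \<alpha> x = x - cor \<Phi> \<alpha> x *\<^sub>R \<alpha>"

definition Bf :: "'v::real_vector set \<Rightarrow> 'v \<Rightarrow> 'v \<Rightarrow> real" where
  "Bf \<Phi> x y = (\<Sum>\<gamma>\<in>\<Phi>. cor \<Phi> \<gamma> x * cor \<Phi> \<gamma> y)"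

lemma cor_props:
  assumes "root_system \<Phi>" "\<alpha> \<in> \<Phi>"
  shows "linear (cor \<Phi> \<alpha>)" "cor \<Phi> \<alpha> \<alpha> = 2" "\<And>\<beta>. \<beta> \<in> \<Phi> \<Longrightarrow> \<beta> - cor \<Phi> \<alpha> \<beta> *\<^sub>R \<alpha> \<in> \<Phi>"
    "\<And>\<beta>. \<beta> \<in> \<Phi> \<Longrightarrow> cor \<Phi> \<alpha> \<beta> \<in> \<int>"
proof -
  from assms obtain c where "linear c \<and> c \<alpha> = 2 \<and> (\<forall>\<beta>\<in>\<Phi>. \<beta> - c \<beta> *\<^sub>R \<alpha> \<in> \<Phi>) \<and> (\<forall>\<beta>\<in>\<Phi>. c \<beta> \<in> \<int>)"
    unfolding root_system_def by blast
  then have "linear (cor \<Phi> \<alpha>) \<and> cor \<Phi> \<alpha> \<alpha> = 2 \<and> (\<forall>\<beta>\<in>\<Phi>. \<beta> - cor \<Phi> \<alpha> \<beta> *\<^sub>R \<alpha> \<in> \<Phi>) \<and> (\<forall>\<beta>\<in>\<Phi>. cor \<Phi> \<alpha> \<beta> \<in> \<int>)"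
    unfolding cor_def by (rule someI[where P="\<lambda>c. linear c \<and> c \<alpha> = 2 \<and> (\<forall>\<beta>\<in>\<Phi>. \<beta> - c \<beta> *\<^sub>R \<alpha> \<in> \<Phi>) \<and> (\<forall>\<beta>\<in>\<Phi>. c \<beta> \<in> \<int>)"])
  then show "linear (cor \<Phi> \<alpha>)" "cor \<Phi> \<alpha> \<alpha> = 2" "\<And>\<beta>. \<beta> \<in> \<Phi> \<Longrightarrow> \<beta> - cor \<Phi> \<alpha> \<beta> *\<^sub>R \<alpha> \<in> \<Phi>"
    "\<And>\<beta>. \<beta> \<in> \<Phi> \<Longrightarrow> cor \<Phi> \<alpha> \<beta> \<in> \<int>" by auto
qed

lemma finite_orbit:
  assumes "finite \<Phi>" "\<And>k::nat. \<beta> + real k *\<^sub>R d \<in> \<Phi>"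
  shows "d = (0::'v::real_vector)"
proof (rule ccontr)
  assume d: "d \<noteq> 0"
  have "inj (\<lambda>k::nat. \<beta> + real k *\<^sub>R d)"
    using d by (auto simp: inj_def)
  moreover have "range (\<lambda>k::nat. \<beta> + real k *\<^sub>R d) \<subseteq> \<Phi>" using assms(2) by auto
  ultimately have "finite (UNIV::nat set)"
    using assms(1) finite_imageD finite_subset by metis
  then show False by simp
qed

lemma cor_unique:
  assumes rs: "root_system \<Phi>" and a: "\<alpha> \<in> \<Phi>" and c: "linear c" "c \<alpha> = 2"
    "\<And>\<beta>. \<beta> \<in> \<Phi> \<Longrightarrow> \<beta> - c \<beta> *\<^sub>R \<alpha> \<in> \<Phi>"
  shows "c = cor \<Phi> \<alpha>"
proof -
  let ?c' = "cor \<Phi> \<alpha>"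
  note cp = cor_props[OF rs a]
  have fin: "finite \<Phi>" and n0: "0 \<notin> \<Phi>" and sp: "span \<Phi> = UNIV" using rs unfolding root_system_def by auto
  have u: "x + (?c' x - c x) *\<^sub>R \<alpha> \<in> \<Phi>" if "x \<in> \<Phi>" for x
  proof -
    have "x - ?c' x *\<^sub>R \<alpha> \<in> \<Phi>" using cp(3) that by auto
    then have "(x - ?c' x *\<^sub>R \<alpha>) - c (x - ?c' x *\<^sub>R \<alpha>) *\<^sub>R \<alpha> \<in> \<Phi>" using c(3) by auto
    moreover have "(x - ?c' x *\<^sub>R \<alpha>) - c (x - ?c' x *\<^sub>R \<alpha>) *\<^sub>R \<alpha> = x + (?c' x - c x) *\<^sub>R \<alpha>"
      using c(1,2) by (simp add: linear_diff linear_scale algebra_simps flip: scaleR_2)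
    ultimately show ?thesis by simp
  qed
  have eq: "c \<beta> = ?c' \<beta>" if b: "\<beta> \<in> \<Phi>" for \<beta>
  proof -
    define e where "e = ?c' \<beta> - c \<beta>"
    have "\<beta> + real k *\<^sub>R (e *\<^sub>R \<alpha>) \<in> \<Phi>" for k
    proof (induction k)
      case 0 then show ?case using b by simp
    next
      case (Suc k)
      let ?y = "\<beta> + real k *\<^sub>R (e *\<^sub>R \<alpha>)"
      have "?y + (?c' ?y - c ?y) *\<^sub>R \<alpha> \<in> \<Phi>" using u Suc by blast
      moreover have "?c' ?y - c ?y = e"
      proof -
        have 1: "?c' ?y = ?c' \<beta> + real k * (e * ?c' \<alpha>)"
          by (simp add: linear_add[OF cp(1)] linear_scale[OF cp(1)])
        have 2: "c ?y = c \<beta> + real k * (e * c \<alpha>)"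
          by (simp add: linear_add[OF c(1)] linear_scale[OF c(1)])
        show ?thesis unfolding 1 2 using c(2) cp(2) by (simp add: e_def)
      qed
      ultimately show ?case by (simp add: algebra_simps)
    qed
    then have "e *\<^sub>R \<alpha> = 0" using finite_orbit[OF fin] by blast
    moreover have "\<alpha> \<noteq> 0" using a n0 by auto
    ultimately show ?thesis by (simp add: e_def)
  qed
  show ?thesis
  proof
    fix x
    have "x \<in> span \<Phi>" using sp by simp
    then show "c x = ?c' x" using linear_eq_on_span[OF c(1) cp(1)] eq by blast
  qed
qed

lemma rs_basic: assumes "root_system \<Phi>" shows "finite \<Phi>" "0 \<notin> \<Phi>" "span \<Phi> = UNIV"
  using assms unfolding root_system_def by auto

lemma rfl_linear: assumes "root_system \<Phi>" "\<alpha> \<in> \<Phi>" shows "linear (rfl \<Phi> \<alpha>)"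
proof -
  note cp = cor_props[OF assms]
  show ?thesis unfolding rfl_def
    by (rule linearI) (simp_all add: linear_add[OF cp(1)] linear_scale[OF cp(1)] algebra_simps)
qed

lemma rfl_self: assumes "root_system \<Phi>" "\<alpha> \<in> \<Phi>" shows "rfl \<Phi> \<alpha> \<alpha> = - \<alpha>"
  using cor_props(2)[OF assms] unfolding rfl_def by (simp add: algebra_simps flip: scaleR_2)

lemma rfl_in: assumes "root_system \<Phi>" "\<alpha> \<in> \<Phi>" "\<beta> \<in> \<Phi>" shows "rfl \<Phi> \<alpha> \<beta> \<in> \<Phi>"
  using cor_props(3)[OF assms(1,2) assms(3)] unfolding rfl_def .

lemma neg_in: assumes "root_system \<Phi>" "\<alpha> \<in> \<Phi>" shows "- \<alpha> \<in> \<Phi>"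
  using rfl_in[OF assms assms(2)] rfl_self[OF assms] by simp

lemma rfl_invol: assumes "root_system \<Phi>" "\<alpha> \<in> \<Phi>" shows "rfl \<Phi> \<alpha> (rfl \<Phi> \<alpha> x) = x"
proof -
  note cp = cor_props[OF assms]
  have "cor \<Phi> \<alpha> (rfl \<Phi> \<alpha> x) = - cor \<Phi> \<alpha> x"
    unfolding rfl_def using cp(2) by (simp add: linear_diff[OF cp(1)] linear_scale[OF cp(1)])
  then show ?thesis unfolding rfl_def[of _ _ "rfl \<Phi> \<alpha> x"] by (simp add: rfl_def)
qed

lemma rfl_image: assumes "root_system \<Phi>" "\<alpha> \<in> \<Phi>" shows "rfl \<Phi> \<alpha> ` \<Phi> = \<Phi>" "inj_on (rfl \<Phi> \<alpha>) \<Phi>"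
proof -
  show "rfl \<Phi> \<alpha> ` \<Phi> = \<Phi>"
  proof
    show "rfl \<Phi> \<alpha> ` \<Phi> \<subseteq> \<Phi>" using rfl_in[OF assms] by auto
    show "\<Phi> \<subseteq> rfl \<Phi> \<alpha> ` \<Phi>"
    proof
      fix x assume "x \<in> \<Phi>"
      then show "x \<in> rfl \<Phi> \<alpha> ` \<Phi>" using rfl_in[OF assms] rfl_invol[OF assms, of x]
        by (metis image_eqI)
    qed
  qed
  show "inj_on (rfl \<Phi> \<alpha>) \<Phi>" by (metis inj_onI rfl_invol[OF assms])
qed

lemma cor_rfl: assumes rs: "root_system \<Phi>" and a: "\<alpha> \<in> \<Phi>" and g: "\<gamma> \<in> \<Phi>"
  shows "cor \<Phi> (rfl \<Phi> \<alpha> \<gamma>) = cor \<Phi> \<gamma> \<circ> rfl \<Phi> \<alpha>"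
proof (rule cor_unique[OF rs rfl_in[OF rs a g], symmetric])
  note cg = cor_props[OF rs g]
  note la = rfl_linear[OF rs a]
  show "linear (cor \<Phi> \<gamma> \<circ> rfl \<Phi> \<alpha>)" using linear_compose[OF la cg(1)] .
  show "(cor \<Phi> \<gamma> \<circ> rfl \<Phi> \<alpha>) (rfl \<Phi> \<alpha> \<gamma>) = 2" using rfl_invol[OF rs a] cg(2) by simp
  fix \<beta> assume b: "\<beta> \<in> \<Phi>"
  have "rfl \<Phi> \<alpha> (rfl \<Phi> \<gamma> (rfl \<Phi> \<alpha> \<beta>)) \<in> \<Phi>"
    using rfl_in[OF rs a] rfl_in[OF rs g] b by auto
  moreover have "rfl \<Phi> \<alpha> (rfl \<Phi> \<gamma> (rfl \<Phi> \<alpha> \<beta>)) = \<beta> - (cor \<Phi> \<gamma> \<circ> rfl \<Phi> \<alpha>) \<beta> *\<^sub>R rfl \<Phi> \<alpha> \<gamma>"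
    unfolding rfl_def[of _ \<gamma>] by (simp add: linear_diff[OF la] linear_scale[OF la] rfl_invol[OF rs a])
  ultimately show "\<beta> - (cor \<Phi> \<gamma> \<circ> rfl \<Phi> \<alpha>) \<beta> *\<^sub>R rfl \<Phi> \<alpha> \<gamma> \<in> \<Phi>" by simp
qed

lemma Bf_rfl: assumes rs: "root_system \<Phi>" and a: "\<alpha> \<in> \<Phi>"
  shows "Bf \<Phi> (rfl \<Phi> \<alpha> x) (rfl \<Phi> \<alpha> y) = Bf \<Phi> x y"
proof -
  have "Bf \<Phi> (rfl \<Phi> \<alpha> x) (rfl \<Phi> \<alpha> y) = (\<Sum>\<gamma>\<in>\<Phi>. cor \<Phi> (rfl \<Phi> \<alpha> \<gamma>) x * cor \<Phi> (rfl \<Phi> \<alpha> \<gamma>) y)"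
    unfolding Bf_def by (rule sum.cong) (auto simp: cor_rfl[OF rs a])
  also have "\<dots> = (\<Sum>\<gamma>\<in>rfl \<Phi> \<alpha> ` \<Phi>. cor \<Phi> \<gamma> x * cor \<Phi> \<gamma> y)"
    by (rule sum.reindex[OF rfl_image(2)[OF rs a], symmetric, unfolded comp_def])
  also have "\<dots> = Bf \<Phi> x y" unfolding rfl_image(1)[OF rs a] Bf_def ..
  finally show ?thesis .
qed

lemma Bf_linear: assumes rs: "root_system \<Phi>" shows "linear (Bf \<Phi> x)"
proof (rule linearI)
  fix y z :: 'a and r :: real
  show "Bf \<Phi> x (y + z) = Bf \<Phi> x y + Bf \<Phi> x z" unfolding Bf_def
    by (simp add: sum.distrib[symmetric] distrib_left linear_add[OF cor_props(1)[OF rs]] cong: sum.cong)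
  show "Bf \<Phi> x (r *\<^sub>R y) = r *\<^sub>R Bf \<Phi> x y" unfolding Bf_def
    by (simp add: sum_distrib_left linear_scale[OF cor_props(1)[OF rs]] algebra_simps cong: sum.cong)
qed

lemma Bf_sym: "Bf \<Phi> x y = Bf \<Phi> y x" unfolding Bf_def by (simp add: mult.commute)

lemma Bf_pos: assumes rs: "root_system \<Phi>" and b: "\<beta> \<in> \<Phi>" shows "Bf \<Phi> \<beta> \<beta> \<ge> 4"
proof -
  have "4 = cor \<Phi> \<beta> \<beta> * cor \<Phi> \<beta> \<beta>" using cor_props(2)[OF rs b] by simp
  also have "\<dots> \<le> Bf \<Phi> \<beta> \<beta>" unfolding Bf_def
    by (rule member_le_sum[OF b]) (auto simp: rs_basic[OF rs])
  finally show ?thesis .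
qed

lemma Bf_CS: "(Bf \<Phi> x y)^2 \<le> Bf \<Phi> x x * Bf \<Phi> y y"
  unfolding Bf_def using Cauchy_Schwarz_ineq_sum[of "\<lambda>\<gamma>. cor \<Phi> \<gamma> x" "\<lambda>\<gamma>. cor \<Phi> \<gamma> y" \<Phi>]
  by (simp add: power2_eq_square)

lemma cor_Bf: assumes rs: "root_system \<Phi>" and b: "\<beta> \<in> \<Phi>"
  shows "cor \<Phi> \<beta> x * Bf \<Phi> \<beta> \<beta> = 2 * Bf \<Phi> x \<beta>"
proof -
  note L = Bf_linear[OF rs]
  have "Bf \<Phi> (rfl \<Phi> \<beta> x) (rfl \<Phi> \<beta> \<beta>) = Bf \<Phi> x \<beta>" by (rule Bf_rfl[OF rs b])
  moreover have "Bf \<Phi> (rfl \<Phi> \<beta> x) (rfl \<Phi> \<beta> \<beta>) = - Bf \<Phi> x \<beta> + cor \<Phi> \<beta> x * Bf \<Phi> \<beta> \<beta>"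
  proof -
    have "Bf \<Phi> (rfl \<Phi> \<beta> x) \<beta> = Bf \<Phi> \<beta> (rfl \<Phi> \<beta> x)" by (rule Bf_sym)
    also have "\<dots> = Bf \<Phi> \<beta> x - cor \<Phi> \<beta> x * Bf \<Phi> \<beta> \<beta>"
      unfolding rfl_def by (simp add: linear_diff[OF L] linear_scale[OF L])
    finally show ?thesis unfolding rfl_self[OF rs b] linear_neg[OF L] by (simp add: Bf_sym[of _ x])
  qed
  ultimately show ?thesis by simp
qed

lemma int_cases_small:
  fixes a b :: real
  assumes "a \<in> \<int>" "b \<in> \<int>" "a > 0" "b > 0" "a * b \<le> 4"
  shows "a = 1 \<or> b = 1 \<or> (a = 2 \<and> b = 2)"
proof -
  obtain m where m: "a = of_int m" using assms(1) Ints_cases by blast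
  obtain n where n: "b = of_int n" using assms(2) Ints_cases by blast
  have "m > 0" "n > 0" using assms m n by auto
  moreover have "m * n \<le> 4" using assms(5) m n by (metis of_int_le_iff of_int_mult of_int_numeral)
  ultimately have "m = 1 \<or> n = 1 \<or> (m = 2 \<and> n = 2)"
  proof -
    assume "m > 0" "n > 0" "m * n \<le> 4"
    moreover have "m \<ge> 2 \<Longrightarrow> n \<ge> 2 \<Longrightarrow> m * n \<ge> 2 * m" by (simp add: mult_left_mono)
    moreover have "m \<ge> 2 \<Longrightarrow> n \<ge> 2 \<Longrightarrow> m * n \<ge> 2 * n" by (simp add: mult_right_mono)
    ultimately show ?thesis by linarith
  qed
  then show ?thesis using m n by auto
qed



lemma key_root:
  assumes rs: "root_system \<Phi>" and a: "\<alpha> \<in> \<Phi>" and b: "\<beta> \<in> \<Phi>" and pos: "Bf \<Phi> \<alpha> \<beta> > 0"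
  shows "\<alpha> - \<beta> \<in> \<Phi> \<or> \<alpha> - \<beta> = 0"
proof -
  define n1 where "n1 = cor \<Phi> \<alpha> \<beta>"
  define n2 where "n2 = cor \<Phi> \<beta> \<alpha>"
  have Ba: "Bf \<Phi> \<alpha> \<alpha> \<ge> 4" and Bb: "Bf \<Phi> \<beta> \<beta> \<ge> 4" using Bf_pos rs a b by auto
  have e1: "n1 * Bf \<Phi> \<alpha> \<alpha> = 2 * Bf \<Phi> \<alpha> \<beta>" using cor_Bf[OF rs a, of \<beta>] Bf_sym[of \<Phi> \<alpha> \<beta>] n1_def by simp
  have e2: "n2 * Bf \<Phi> \<beta> \<beta> = 2 * Bf \<Phi> \<alpha> \<beta>" using cor_Bf[OF rs b, of \<alpha>] n2_def by simp
  have p1: "n1 > 0"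
  proof -
    have "0 < n1 * Bf \<Phi> \<alpha> \<alpha>" using e1 pos by simp
    then show ?thesis using Ba by (simp add: zero_less_mult_iff)
  qed
  have p2: "n2 > 0"
  proof -
    have "0 < n2 * Bf \<Phi> \<beta> \<beta>" using e2 pos by simp
    then show ?thesis using Bb by (simp add: zero_less_mult_iff)
  qed
  have "(n1 * n2) * (Bf \<Phi> \<alpha> \<alpha> * Bf \<Phi> \<beta> \<beta>) = (n1 * Bf \<Phi> \<alpha> \<alpha>) * (n2 * Bf \<Phi> \<beta> \<beta>)"
    by (simp only: mult_ac)
  also have "\<dots> = 4 * (Bf \<Phi> \<alpha> \<beta>)^2" unfolding e1 e2 by (simp add: power2_eq_square)
  also have "\<dots> \<le> 4 * (Bf \<Phi> \<alpha> \<alpha> * Bf \<Phi> \<beta> \<beta>)" using Bf_CS[of \<Phi> \<alpha> \<beta>] by simp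
  finally have le: "(n1 * n2) * (Bf \<Phi> \<alpha> \<alpha> * Bf \<Phi> \<beta> \<beta>) \<le> 4 * (Bf \<Phi> \<alpha> \<alpha> * Bf \<Phi> \<beta> \<beta>)" .
  have "0 < Bf \<Phi> \<alpha> \<alpha> * Bf \<Phi> \<beta> \<beta>" using Ba Bb by simp
  then have "n1 * n2 \<le> 4" using le by (simp add: mult_le_cancel_right)
  moreover have "n1 \<in> \<int>" "n2 \<in> \<int>" using cor_props(4) rs a b n1_def n2_def by auto
  ultimately have c: "n1 = 1 \<or> n2 = 1 \<or> (n1 = 2 \<and> n2 = 2)" using int_cases_small p1 p2 by blast
  show ?thesis
  proof -
    { assume "n2 = 1"
      then have "\<alpha> - \<beta> \<in> \<Phi>" using rfl_in[OF rs b a] unfolding rfl_def n2_def by simp }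
    moreover
    { assume "n1 = 1"
      then have "\<beta> - \<alpha> \<in> \<Phi>" using rfl_in[OF rs a b] unfolding rfl_def n1_def by simp
      then have "\<alpha> - \<beta> \<in> \<Phi>" using neg_in[OF rs] by fastforce }
    moreover
    { assume nn: "n1 = 2" "n2 = 2"
      note ca = cor_props[OF rs a] and cb = cor_props[OF rs b]
      have "\<alpha> + real k *\<^sub>R (2 *\<^sub>R (\<alpha> - \<beta>)) \<in> \<Phi>" for k
      proof (induction k)
        case 0 then show ?case using a by simp
      next
        case (Suc k)
        let ?x = "\<alpha> + real k *\<^sub>R (2 *\<^sub>R (\<alpha> - \<beta>))"
        have 1: "cor \<Phi> \<beta> ?x = 2"
          using nn cb(2) by (simp add: n1_def n2_def linear_add[OF cb(1)] linear_scale[OF cb(1)] linear_diff[OF cb(1)])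
        have "rfl \<Phi> \<beta> ?x \<in> \<Phi>" using rfl_in[OF rs b Suc] .
        then have y: "?x - 2 *\<^sub>R \<beta> \<in> \<Phi>" unfolding rfl_def 1 .
        have 2: "cor \<Phi> \<alpha> (?x - 2 *\<^sub>R \<beta>) = -2"
          using nn ca(2) by (simp add: n1_def n2_def linear_add[OF ca(1)] linear_scale[OF ca(1)] linear_diff[OF ca(1)])
        have "rfl \<Phi> \<alpha> (?x - 2 *\<^sub>R \<beta>) \<in> \<Phi>" using rfl_in[OF rs a y] .
        then show ?case unfolding rfl_def 2 by (simp add: algebra_simps)
      qed
      then have "2 *\<^sub>R (\<alpha> - \<beta>) = 0" using finite_orbit rs_basic(1)[OF rs] by blast
      then have "\<alpha> - \<beta> = 0" by simp }
    ultimately show ?thesis using c by blast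
  qed
qed


lemma sum_list_remove1': "x \<in> set xs \<Longrightarrow> sum_list xs = x + sum_list (remove1 x (xs::'a::ab_group_add list))"
  by (induction xs) (auto simp: algebra_simps)

lemma linear_sum_list: "linear f \<Longrightarrow> f (sum_list xs) = sum_list (map f xs)"
  by (induction xs) (auto simp: linear_add linear_0)

lemma sum_list_pos_ex: "sum_list (map f xs) > (0::real) \<Longrightarrow> \<exists>x\<in>set xs. f x > 0"
  by (induction xs) (auto, smt (verit))

lemma closed_sum:
  assumes rs: "root_system \<Phi>" and cs: "closed_subsystem \<Phi> P"
  shows "set xs \<subseteq> P \<union> {0} \<Longrightarrow> sum_list xs \<in> \<Phi> \<union> {0} \<Longrightarrow> sum_list xs \<in> P \<union> {0}"
proof (induction xs rule: length_induct)
  case (1 xs)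
  have IH: "\<And>ys. length ys < length xs \<Longrightarrow> set ys \<subseteq> P \<union> {0} \<Longrightarrow> sum_list ys \<in> \<Phi> \<union> {0} \<Longrightarrow> sum_list ys \<in> P \<union> {0}"
    using 1(1) by blast
  have PP: "P \<subseteq> \<Phi>" using cs unfolding closed_subsystem_def by (elim conjE)
  have cl: "\<And>a b. a \<in> P \<Longrightarrow> b \<in> P \<Longrightarrow> a + b \<in> \<Phi> \<Longrightarrow> a + b \<in> P"
    using cs unfolding closed_subsystem_def by (elim conjE) blast
  show ?case
  proof (cases "0 \<in> set xs")
    case True
    have e: "sum_list xs = sum_list (remove1 0 xs)" using sum_list_remove1'[OF True] by simp
    have "length (remove1 0 xs) < length xs" using length_pos_if_in_set[OF True] by (simp add: length_remove1 True)
    moreover have "set (remove1 0 xs) \<subseteq> P \<union> {0}" by (rule subset_trans[OF set_remove1_subset 1(2)])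
    ultimately show ?thesis using IH[of "remove1 0 xs"] 1(3) e by simp
  next
    case nz: False
    show ?thesis
    proof (cases "sum_list xs = 0")
      case True then show ?thesis by simp
    next
      case False
      define \<sigma> where "\<sigma> = sum_list xs"
      have s: "\<sigma> \<in> \<Phi>" using 1(3) False \<sigma>_def by auto
      have xsP: "set xs \<subseteq> P" using 1(2) nz by auto
      have "Bf \<Phi> \<sigma> \<sigma> > 0" using Bf_pos[OF rs s] by simp
      also have "Bf \<Phi> \<sigma> \<sigma> = sum_list (map (Bf \<Phi> \<sigma>) xs)"
        unfolding \<sigma>_def[symmetric] using linear_sum_list[OF Bf_linear[OF rs], of \<sigma> xs] \<sigma>_def by simp
      finally obtain x where x: "x \<in> set xs" "Bf \<Phi> \<sigma> x > 0" using sum_list_pos_ex by blast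
      have xP: "x \<in> P" using x xsP by auto
      have k: "\<sigma> - x \<in> \<Phi> \<or> \<sigma> - x = 0" using key_root[OF rs s _ x(2)] xP PP by auto
      have r: "sum_list (remove1 x xs) = \<sigma> - x" using sum_list_remove1'[OF x(1)] \<sigma>_def by simp
      have "length (remove1 x xs) < length xs" using length_pos_if_in_set[OF x(1)] by (simp add: length_remove1 x(1))
      moreover have "set (remove1 x xs) \<subseteq> P \<union> {0}" by (rule subset_trans[OF set_remove1_subset 1(2)])
      ultimately have "\<sigma> - x \<in> P \<union> {0}" using IH[of "remove1 x xs"] r k by auto
      then show ?thesis
      proof
        assume "\<sigma> - x \<in> P"
        then have "(\<sigma> - x) + x \<in> P" using cl[of "\<sigma> - x" x] xP s by simp
        then show ?thesis using \<sigma>_def by simp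
      next
        assume "\<sigma> - x \<in> {0}" then show ?thesis using xP \<sigma>_def by simp
      qed
    qed
  qed
qed




definition cnt :: "nat list \<Rightarrow> nat \<Rightarrow> nat" where "cnt ks m = length (filter (\<lambda>k. k = m) ks)"
definition QQ :: "nat list \<Rightarrow> nat \<Rightarrow> bool" where
  "QQ ks j \<longleftrightarrow> j \<le> Max (set ks) \<and> (j = Max (set ks) \<or> 2 \<le> cnt ks (Max (set ks)))"
definition RR :: "nat \<Rightarrow> nat \<Rightarrow> nat \<Rightarrow> bool" where
  "RR j j1 j2 \<longleftrightarrow> (j \<le> j1 \<and> j1 = j2) \<or> (j2 \<le> j \<and> j = j1) \<or> (j1 \<le> j2 \<and> j2 = j)"

lemma cnt_Cons: "cnt (k # ks) m = (if k = m then 1 else 0) + cnt ks m" by (simp add: cnt_def)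
lemma cnt_append: "cnt (xs @ ys) m = cnt xs m + cnt ys m" by (simp add: cnt_def)
lemma cnt_zero: "(\<And>k. k \<in> set ks \<Longrightarrow> k < m) \<Longrightarrow> cnt ks m = 0"
  by (auto simp: cnt_def filter_empty_conv)

lemma QQ_single: "QQ [k] j \<Longrightarrow> j = k" by (simp add: QQ_def cnt_def)
lemma QQ_Max: "ks \<noteq> [] \<Longrightarrow> QQ ks (Max (set ks))" by (simp add: QQ_def)

lemma comb:
  assumes ne: "ks \<noteq> []" and q: "QQ (k # ks) j"
  shows "\<exists>J. QQ ks J \<and> RR j k J"
proof -
  define M' where "M' = Max (set ks)"
  have fin: "finite (set ks)" "set ks \<noteq> {}" using ne by auto
  have Mx: "Max (set (k # ks)) = max k M'" using fin by (simp add: M'_def Max_insert)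
  have le: "\<And>x. x \<in> set ks \<Longrightarrow> x \<le> M'" using fin M'_def by simp
  have qM: "QQ ks M'" using QQ_Max[OF ne] M'_def by simp
  consider "k > M'" | "k < M'" | "k = M'" by linarith
  then show ?thesis
  proof cases
    case 1
    have "cnt ks k = 0" using le 1 by (intro cnt_zero) fastforce
    then have "j = k" using q 1 Mx by (simp add: QQ_def cnt_Cons)
    then show ?thesis using qM 1 by (auto simp: RR_def)
  next
    case 2
    have c: "cnt (k # ks) M' = cnt ks M'" using 2 by (simp add: cnt_Cons)
    have mx: "Max (set (k # ks)) = M'" using Mx 2 by simp
    show ?thesis
    proof (cases "j = M'")
      case True then show ?thesis using qM 2 by (auto simp: RR_def)
    next
      case False
      then have c2: "2 \<le> cnt ks M'" and jM: "j \<le> M'" using q c mx by (auto simp: QQ_def)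
      show ?thesis
      proof (cases "k \<le> j")
        case True
        then have "QQ ks j" "RR j k j" using c2 jM M'_def by (auto simp: QQ_def RR_def)
        then show ?thesis by blast
      next
        case False
        then have "QQ ks k" "RR j k k" using c2 2 M'_def by (auto simp: QQ_def RR_def)
        then show ?thesis by blast
      qed
    qed
  next
    case 3
    then have "j \<le> M'" using q Mx by (simp add: QQ_def)
    then show ?thesis using qM 3 by (auto simp: RR_def)
  qed
qed

lemma comb2:
  assumes ne1: "ks1 \<noteq> []" and ne2: "ks2 \<noteq> []" and q: "QQ (ks1 @ ks2) j"
  shows "\<exists>J1 J2. QQ ks1 J1 \<and> QQ ks2 J2 \<and> RR j J1 J2"
proof -
  define M1 where "M1 = Max (set ks1)"
  define M2 where "M2 = Max (set ks2)"
  have Mx: "Max (set (ks1 @ ks2)) = max M1 M2" using ne1 ne2 by (simp add: M1_def M2_def Max_Un)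
  have le1: "\<And>x. x \<in> set ks1 \<Longrightarrow> x \<le> M1" using M1_def by simp
  have le2: "\<And>x. x \<in> set ks2 \<Longrightarrow> x \<le> M2" using M2_def by simp
  have q1: "QQ ks1 M1" using QQ_Max[OF ne1] M1_def by simp
  have q2: "QQ ks2 M2" using QQ_Max[OF ne2] M2_def by simp
  consider "M1 > M2" | "M1 < M2" | "M1 = M2" by linarith
  then show ?thesis
  proof cases
    case 1
    have "cnt ks2 M1 = 0" using le2 1 by (intro cnt_zero) fastforce
    then have c: "cnt (ks1 @ ks2) M1 = cnt ks1 M1" by (simp add: cnt_append)
    show ?thesis
    proof (cases "j = M1")
      case True then show ?thesis using q1 q2 1 unfolding RR_def by (intro exI[of _ M1] exI[of _ M2]) auto
    next
      case False
      then have c2: "2 \<le> cnt ks1 M1" and jM: "j \<le> M1" using q c Mx 1 by (auto simp: QQ_def max_def)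
      show ?thesis
      proof (cases "j \<le> M2")
        case True
        then have "QQ ks1 M2" "RR j M2 M2" using c2 1 M1_def by (auto simp: QQ_def RR_def)
        then show ?thesis using q2 by blast
      next
        case False
        then have "QQ ks1 j" "RR j j M2" using c2 jM M1_def by (auto simp: QQ_def RR_def)
        then show ?thesis using q2 by blast
      qed
    qed
  next
    case 2
    have "cnt ks1 M2 = 0" using le1 2 by (intro cnt_zero) fastforce
    then have c: "cnt (ks1 @ ks2) M2 = cnt ks2 M2" by (simp add: cnt_append)
    show ?thesis
    proof (cases "j = M2")
      case True then show ?thesis using q1 q2 2 unfolding RR_def by (intro exI[of _ M1] exI[of _ M2]) auto
    next
      case False
      then have c2: "2 \<le> cnt ks2 M2" and jM: "j \<le> M2" using q c Mx 2 by (auto simp: QQ_def max_def)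
      show ?thesis
      proof (cases "j \<le> M1")
        case True
        then have "QQ ks2 M1" "RR j M1 M1" using c2 2 M2_def by (auto simp: QQ_def RR_def)
        then show ?thesis using q1 by blast
      next
        case False
        then have "QQ ks2 j" "RR j M1 j" using c2 jM M2_def by (auto simp: QQ_def RR_def)
        then show ?thesis using q1 by blast
      qed
    qed
  next
    case 3
    then have "j \<le> M1" using q Mx by (simp add: QQ_def)
    then show ?thesis using q1 q2 3 by (auto simp: RR_def)
  qed
qed




lemma vee_top:
  fixes \<tau> \<tau>' :: "real \<Rightarrow> 'i::linorder \<Rightarrow> nat \<Rightarrow> 's::{complete_lattice, ordered_ab_semigroup_add}"
  assumes "j1 \<le> l" "j2 \<le> l" "RR j j1 j2"
  shows "vee3 l \<tau> \<tau>' (v1 + v2) i j \<le> \<tau> v1 i j1 + \<tau>' v2 i j2"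
proof -
  have A: "vee3 l \<tau> \<tau>' (v1 + v2) \<le> vee2 l (\<tau> v1) (\<tau>' v2)"
    unfolding vee3_def by (rule Inf_lower) blast
  have B: "vee2 l (\<tau> v1) (\<tau>' v2) i \<le> vee1 l (\<tau> v1 i) (\<tau>' v2 i)"
    unfolding vee2_def by (rule Inf_lower) blast
  have "vee3 l \<tau> \<tau>' (v1 + v2) i j \<le> vee2 l (\<tau> v1) (\<tau>' v2) i j"
    using le_funD[OF le_funD[OF A]] .
  also have "\<dots> \<le> vee1 l (\<tau> v1 i) (\<tau>' v2 i) j"
    using le_funD[OF B] .
  also have "\<dots> \<le> \<tau> v1 i j1 + \<tau>' v2 i j2"
    unfolding vee1_def using assms unfolding RR_def by (intro Inf_lower) blast
  finally show ?thesis .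
qed

lemma conc_step:
  fixes \<tau> :: "real \<Rightarrow> 'i::linorder \<Rightarrow> nat \<Rightarrow> 's::{complete_lattice, ordered_ab_semigroup_add}"
  assumes "concave3 l \<tau>" "j \<le> l" "j1 \<le> l" "j2 \<le> l" "RR j j1 j2"
  shows "\<tau> (v1 + v2) i j \<le> \<tau> v1 i j1 + \<tau> v2 i j2"
  using assms(1,2) unfolding concave3_def using vee_top[OF assms(3-5)] order_trans by blast

lemma nesum_Cons: "xs \<noteq> [] \<Longrightarrow> nesum (x # xs) = x + nesum xs"
  by (cases xs) auto

lemma nesum_mono:
  fixes f g :: "'a \<Rightarrow> 's::ordered_ab_semigroup_add"
  shows "xs \<noteq> [] \<Longrightarrow> (\<And>x. x \<in> set xs \<Longrightarrow> f x \<le> g x) \<Longrightarrow> nesum (map f xs) \<le> nesum (map g xs)"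
proof (induction xs)
  case Nil then show ?case by simp
next
  case (Cons a xs)
  show ?case
  proof (cases "xs = []")
    case True then show ?thesis using Cons by simp
  next
    case False
    then show ?thesis using Cons by (simp add: nesum_Cons add_mono)
  qed
qed

lemma QQ_le_l: "QQ ks j \<Longrightarrow> ks \<noteq> [] \<Longrightarrow> (\<And>k. k \<in> set ks \<Longrightarrow> k \<le> l) \<Longrightarrow> j \<le> l"
  unfolding QQ_def by (meson List.finite_set Max_in order_trans set_empty)

lemma chain_le:
  fixes g :: "real \<Rightarrow> nat \<Rightarrow> 's::{complete_lattice, ordered_ab_semigroup_add}"
  assumes conc: "\<And>v1 v2 j j1 j2. j \<le> l \<Longrightarrow> j1 \<le> l \<Longrightarrow> j2 \<le> l \<Longrightarrow> RR j j1 j2 \<Longrightarrow> g (v1+v2) j \<le> g v1 j1 + g v2 j2"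
  shows "ps \<noteq> [] \<Longrightarrow> (\<And>p. p \<in> set ps \<Longrightarrow> snd p \<le> l) \<Longrightarrow> QQ (map snd ps) j \<Longrightarrow>
    g (sum_list (map fst ps)) j \<le> nesum (map (\<lambda>p. g (fst p) (snd p)) ps)"
proof (induction ps arbitrary: j)
  case Nil then show ?case by simp
next
  case (Cons p ps)
  show ?case
  proof (cases "ps = []")
    case True then show ?thesis using Cons.prems(3) QQ_single[of "snd p" j] by simp
  next
    case False
    then have ne: "map snd ps \<noteq> []" by simp
    obtain J where J: "QQ (map snd ps) J" "RR j (snd p) J" using comb[OF ne] Cons.prems(3) by auto
    have kl: "\<And>k. k \<in> set (map snd ps) \<Longrightarrow> k \<le> l" using Cons.prems(2) by auto
    have Jl: "J \<le> l" using QQ_le_l[OF J(1) ne kl] .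
    have kl2: "\<And>k. k \<in> set (map snd (p # ps)) \<Longrightarrow> k \<le> l"
    proof -
      fix k assume "k \<in> set (map snd (p # ps))"
      then obtain q where "q \<in> set (p # ps)" "k = snd q" by (metis imageE set_map)
      then show "k \<le> l" using Cons.prems(2) by blast
    qed
    have jl: "j \<le> l" using QQ_le_l[OF Cons.prems(3) _ kl2] by simp
    have "g (sum_list (map fst (p # ps))) j \<le> g (fst p) (snd p) + g (sum_list (map fst ps)) J"
      using conc[OF jl _ Jl J(2)] Cons.prems(2) by simp
    also have "\<dots> \<le> g (fst p) (snd p) + nesum (map (\<lambda>p. g (fst p) (snd p)) ps)"
      using Cons.IH[OF False _ J(1)] Cons.prems(2) by (simp add: add_left_mono)
    also have "\<dots> = nesum (map (\<lambda>p. g (fst p) (snd p)) (p # ps))" using False by (simp add: nesum_Cons)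
    finally show ?thesis .
  qed
qed

lemma chain_le':
  fixes g :: "real \<Rightarrow> nat \<Rightarrow> 's::{complete_lattice, ordered_ab_semigroup_add}"
  assumes conc: "(\<forall>v1 v2 j j1 j2. j \<le> l \<longrightarrow> j1 \<le> l \<longrightarrow> j2 \<le> l \<longrightarrow> RR j j1 j2 \<longrightarrow> g (v1+v2) j \<le> g v1 j1 + g v2 j2) \<or> length ps = 1"
  and "ps \<noteq> []" "\<And>p. p \<in> set ps \<Longrightarrow> snd p \<le> l" "QQ (map snd ps) j"
  shows "g (sum_list (map fst ps)) j \<le> nesum (map (\<lambda>p. g (fst p) (snd p)) ps)"
proof (cases "length ps = 1")
  case True
  then obtain p where "ps = [p]" by (cases ps) auto
  then show ?thesis using assms(4) QQ_single[of "snd p" j] by simp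
next
  case False
  then show ?thesis using chain_le[of l g ps j] conc assms(2-4) by blast
qed

lemma mixed_le:
  fixes h ga gb :: "real \<Rightarrow> nat \<Rightarrow> 's::{complete_lattice, ordered_ab_semigroup_add}"
  assumes top: "\<And>v1 v2 j j1 j2. j1 \<le> l \<Longrightarrow> j2 \<le> l \<Longrightarrow> RR j j1 j2 \<Longrightarrow> h (v1+v2) j \<le> ga v1 j1 + gb v2 j2"
  and c1: "(\<forall>v1 v2 j j1 j2. j \<le> l \<longrightarrow> j1 \<le> l \<longrightarrow> j2 \<le> l \<longrightarrow> RR j j1 j2 \<longrightarrow> ga (v1+v2) j \<le> ga v1 j1 + ga v2 j2) \<or> length ps1 = 1"
  and c2: "(\<forall>v1 v2 j j1 j2. j \<le> l \<longrightarrow> j1 \<le> l \<longrightarrow> j2 \<le> l \<longrightarrow> RR j j1 j2 \<longrightarrow> gb (v1+v2) j \<le> gb v1 j1 + gb v2 j2) \<or> length ps2 = 1"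
  and ne: "ps1 \<noteq> []" "ps2 \<noteq> []"
  and l1: "\<And>p. p \<in> set ps1 \<Longrightarrow> snd p \<le> l" and l2: "\<And>p. p \<in> set ps2 \<Longrightarrow> snd p \<le> l"
  and q: "QQ (map snd ps1 @ map snd ps2) j"
  shows "h (sum_list (map fst ps1) + sum_list (map fst ps2)) j
     \<le> nesum (map (\<lambda>p. ga (fst p) (snd p)) ps1) + nesum (map (\<lambda>p. gb (fst p) (snd p)) ps2)"
proof -
  obtain J1 J2 where J: "QQ (map snd ps1) J1" "QQ (map snd ps2) J2" "RR j J1 J2"
    using comb2[of "map snd ps1" "map snd ps2" j] ne q by auto
  have k1: "\<And>k. k \<in> set (map snd ps1) \<Longrightarrow> k \<le> l" using l1 by auto
  have k2: "\<And>k. k \<in> set (map snd ps2) \<Longrightarrow> k \<le> l" using l2 by auto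
  have J1l: "J1 \<le> l" using QQ_le_l[OF J(1) _ k1] ne by simp
  have J2l: "J2 \<le> l" using QQ_le_l[OF J(2) _ k2] ne by simp
  have "h (sum_list (map fst ps1) + sum_list (map fst ps2)) j
      \<le> ga (sum_list (map fst ps1)) J1 + gb (sum_list (map fst ps2)) J2"
    by (rule top[OF J1l J2l J(3)])
  also have "\<dots> \<le> nesum (map (\<lambda>p. ga (fst p) (snd p)) ps1) + nesum (map (\<lambda>p. gb (fst p) (snd p)) ps2)"
    by (intro add_mono chain_le'[OF c1 ne(1) l1 J(1)] chain_le'[OF c2 ne(2) l2 J(2)])
  finally show ?thesis .
qed




definition jl :: "(nat \<Rightarrow> 'v::real_vector set) \<Rightarrow> 'v \<Rightarrow> nat" where
  "jl Phis \<alpha> = (LEAST j. \<alpha> \<in> Phis j \<union> {0})"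

lemma sum_list_uminus: "sum_list (map uminus xs) = - sum_list (xs::'a::ab_group_add list)"
  by (induction xs) auto

lemma RC:
  assumes rs: "root_system \<Phi>" and sub: "\<And>j. j \<le> l \<Longrightarrow> closed_subsystem \<Phi> (Phis j)"
    and chain: "\<And>j j'. j \<le> j' \<Longrightarrow> j' \<le> l \<Longrightarrow> Phis j \<subseteq> Phis j'"
    and top: "Phis l = \<Phi>"
    and xs: "xs \<noteq> []" "set xs \<subseteq> \<Phi> \<union> {0}" "sum_list xs \<in> \<Phi> \<union> {0}"
  shows "QQ (map (jl Phis) xs) (jl Phis (sum_list xs))"
proof -
  have jle: "jl Phis x \<le> l" if "x \<in> \<Phi> \<union> {0}" for x
    unfolding jl_def by (rule Least_le) (use that top in auto)
  have jin: "x \<in> Phis (jl Phis x) \<union> {0}" if "x \<in> \<Phi> \<union> {0}" for x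
    unfolding jl_def by (rule LeastI[of _ l]) (use that top in auto)
  have jmin: "jl Phis x \<le> j" if "x \<in> Phis j \<union> {0}" for x j
    unfolding jl_def by (rule Least_le) (use that in auto)
  have mono: "x \<in> Phis j' \<union> {0}" if "x \<in> Phis j \<union> {0}" "j \<le> j'" "j' \<le> l" for x j j'
    using chain[OF that(2,3)] that(1) by blast
  define \<sigma> where "\<sigma> = sum_list xs"
  define M where "M = Max (set (map (jl Phis) xs))"
  have Mge: "jl Phis x \<le> M" if "x \<in> set xs" for x using that M_def by simp
  have Min: "M \<in> set (map (jl Phis) xs)" using M_def xs(1) by simp
  have Ml: "M \<le> l" using Min jle xs(2) by auto
  have in_M: "set xs \<subseteq> Phis M \<union> {0}"
  proof
    fix x assume x: "x \<in> set xs"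
    then have "x \<in> \<Phi> \<union> {0}" using xs(2) by auto
    then show "x \<in> Phis M \<union> {0}" using mono[OF jin Mge[OF x] Ml] by simp
  qed
  have "\<sigma> \<in> Phis M \<union> {0}" using closed_sum[OF rs sub[OF Ml] in_M] xs(3) \<sigma>_def by simp
  then have a: "jl Phis \<sigma> \<le> M" by (rule jmin)
  have b: "2 \<le> cnt (map (jl Phis) xs) M" if ne: "jl Phis \<sigma> \<noteq> M"
  proof (rule ccontr)
    assume c: "\<not> 2 \<le> cnt (map (jl Phis) xs) M"
    have ex: "\<exists>x\<in>set xs. jl Phis x = M" using Min by auto
    obtain ys x0 zs where sp: "xs = ys @ x0 # zs" "jl Phis x0 = M" "\<forall>y\<in>set ys. jl Phis y \<noteq> M"
      using split_list_first_prop[OF ex] by blast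
    have "cnt (map (jl Phis) xs) M = length (filter (\<lambda>x. jl Phis x = M) ys) + 1 + length (filter (\<lambda>x. jl Phis x = M) zs)"
      unfolding cnt_def sp(1) using sp(2) by (simp add: filter_map comp_def)
    moreover have "filter (\<lambda>x. jl Phis x = M) ys = []" using sp(3) by (simp add: filter_empty_conv)
    ultimately have "length (filter (\<lambda>x. jl Phis x = M) zs) = 0" using c by linarith
    then have "filter (\<lambda>x. jl Phis x = M) zs = []" by blast
    then have zsM: "\<forall>z\<in>set zs. jl Phis z \<noteq> M" by (simp add: filter_empty_conv)
    define ws where "ws = ys @ zs"
    have wsub: "set ws \<subseteq> set xs" using sp(1) ws_def by auto
    have wlt: "jl Phis w < M" if "w \<in> set ws" for w
    proof -
      have "jl Phis w \<noteq> M" using that sp(3) zsM unfolding ws_def by auto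
      moreover have "jl Phis w \<le> M" using Mge wsub that by auto
      ultimately show ?thesis by simp
    qed
    have slt: "jl Phis \<sigma> < M" using a ne by simp
    define M' where "M' = M - 1"
    have M'l: "M' \<le> l" using Ml M'_def by simp
    have sigin: "\<sigma> \<in> \<Phi> \<union> {0}" using xs(3) \<sigma>_def by simp
    have L: "set (\<sigma> # map uminus ws) \<subseteq> Phis M' \<union> {0}"
    proof
      fix y assume y: "y \<in> set (\<sigma> # map uminus ws)"
      show "y \<in> Phis M' \<union> {0}"
      proof (cases "y = \<sigma>")
        case True
        then show ?thesis using mono[OF jin[OF sigin], of M'] slt M'_def M'l by simp
      next
        case False
        then obtain w where w: "w \<in> set ws" "y = - w" using y by auto
        have win: "w \<in> \<Phi> \<union> {0}" using w(1) wsub xs(2) by auto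
        have "w \<in> Phis M' \<union> {0}" using mono[OF jin[OF win], of M'] wlt[OF w(1)] M'_def M'l by simp
        moreover have "\<And>a. a \<in> Phis M' \<Longrightarrow> - a \<in> Phis M'"
          using sub[OF M'l] unfolding closed_subsystem_def by (elim conjE) blast
        ultimately show ?thesis using w(2) by auto
      qed
    qed
    have sL: "sum_list (\<sigma> # map uminus ws) = x0"
      using sp(1) \<sigma>_def ws_def by (simp add: sum_list_uminus)
    have x0in: "x0 \<in> \<Phi> \<union> {0}" using sp(1) xs(2) by auto
    have "x0 \<in> Phis M' \<union> {0}" using closed_sum[OF rs sub[OF M'l] L] sL x0in by simp
    then have "jl Phis x0 \<le> M'" by (rule jmin)
    then show False using sp(2) M'_def slt by simp
  qed
  show ?thesis unfolding QQ_def using a b M_def \<sigma>_def by auto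
qed




theorem lemmaB7:
  fixes l :: nat
    and \<Phi> :: "'v::real_vector set"
    and Phis :: "nat \<Rightarrow> 'v set"
    and lam :: "'v \<Rightarrow> real"
    and \<tau> \<tau>' :: "real \<Rightarrow> 'i::linorder \<Rightarrow> nat \<Rightarrow> 's::{complete_lattice, ordered_ab_semigroup_add}"
  assumes rs: "root_system \<Phi>"
    and sub: "\<And>j. j \<le> l \<Longrightarrow> closed_subsystem \<Phi> (Phis j)"
    and chain: "\<And>j j'. j \<le> j' \<Longrightarrow> j' \<le> l \<Longrightarrow> Phis j \<subseteq> Phis j'"
    and top: "Phis l = \<Phi>"
    and lin: "linear lam"
  defines "\<Psi> \<equiv> \<Phi> \<union> {0}"
  shows "(concave3 l \<tau> \<longrightarrow> concave_fun \<Psi> (f_tau l Phis lam \<tau>))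
    \<and> (\<forall>\<alpha>\<in>\<Psi>. f_tau l Phis lam (vee3 l \<tau> \<tau>') \<alpha>
                  \<le> bowtie \<Psi> (f_tau l Phis lam \<tau>) (f_tau l Phis lam \<tau>') \<alpha>)
    \<and> (concave3 l \<tau> \<longrightarrow> (\<forall>\<alpha>\<in>\<Psi>. f_tau l Phis lam (vee3 l \<tau> \<tau>') \<alpha>
                  \<le> rtimes \<Psi> (f_tau l Phis lam \<tau>) (f_tau l Phis lam \<tau>') \<alpha>))
    \<and> (concave3 l \<tau> \<and> concave3 l \<tau>' \<longrightarrow> (\<forall>\<alpha>\<in>\<Psi>. f_tau l Phis lam (vee3 l \<tau> \<tau>') \<alpha>
                  \<le> curlyvee \<Psi> (f_tau l Phis lam \<tau>) (f_tau l Phis lam \<tau>') \<alpha>))"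
proof -
  have f_eq: "\<And>(\<rho> :: real \<Rightarrow> 'i \<Rightarrow> nat \<Rightarrow> 's) \<alpha>. f_tau l Phis lam \<rho> \<alpha> = (SUP i. \<rho> (lam \<alpha>) i (jl Phis \<alpha>))"
    by (simp add: f_tau_def jl_def)
  have lamsum: "\<And>xs. lam (sum_list xs) = sum_list (map lam xs)" using linear_sum_list[OF lin] by blast
  have jle: "jl Phis x \<le> l" if "x \<in> \<Psi>" for x
    unfolding jl_def using that top \<Psi>_def by (intro Least_le) auto
  have concg: "\<forall>v1 v2 j j1 j2. j \<le> l \<longrightarrow> j1 \<le> l \<longrightarrow> j2 \<le> l \<longrightarrow> RR j j1 j2 \<longrightarrow>
      \<rho> (v1+v2) i j \<le> \<rho> v1 i j1 + \<rho> v2 i j2" if "concave3 l \<rho>" for \<rho> :: "real \<Rightarrow> 'i \<Rightarrow> nat \<Rightarrow> 's" and i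
    using conc_step[OF that] by blast
  have ps_l: "\<And>p. p \<in> set (map (\<lambda>a. (lam a, jl Phis a)) as) \<Longrightarrow> snd p \<le> l" if "set as \<subseteq> \<Psi>" for as
    using that jle by auto
  have nes: "nesum (map (\<lambda>p. \<rho> (fst p) i (snd p)) (map (\<lambda>a. (lam a, jl Phis a)) as))
       \<le> nesum (map (f_tau l Phis lam \<rho>) as)" if "as \<noteq> []" for as and \<rho> :: "real \<Rightarrow> 'i \<Rightarrow> nat \<Rightarrow> 's" and i
  proof -
    have "nesum (map (\<lambda>p. \<rho> (fst p) i (snd p)) (map (\<lambda>a. (lam a, jl Phis a)) as))
        = nesum (map (\<lambda>a. \<rho> (lam a) i (jl Phis a)) as)" by (simp add: comp_def)
    also have "\<dots> \<le> nesum (map (f_tau l Phis lam \<rho>) as)"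
      by (rule nesum_mono[OF that]) (unfold f_eq, rule SUP_upper, simp)
    finally show ?thesis .
  qed
  have G: "f_tau l Phis lam (vee3 l \<tau> \<tau>') (sum_list as + sum_list bs)
      \<le> nesum (map (f_tau l Phis lam \<tau>) as) + nesum (map (f_tau l Phis lam \<tau>') bs)"
    if c1: "concave3 l \<tau> \<or> length as = 1" and c2: "concave3 l \<tau>' \<or> length bs = 1"
      and ne: "as \<noteq> []" "bs \<noteq> []" and s: "set as \<subseteq> \<Psi>" "set bs \<subseteq> \<Psi>"
      and t: "sum_list as + sum_list bs \<in> \<Psi>" for as bs
  proof -
    define \<alpha> where "\<alpha> = sum_list as + sum_list bs"
    define ps1 where "ps1 = map (\<lambda>a. (lam a, jl Phis a)) as"
    define ps2 where "ps2 = map (\<lambda>a. (lam a, jl Phis a)) bs"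
    have q: "QQ (map snd ps1 @ map snd ps2) (jl Phis \<alpha>)"
      using RC[where \<Phi>=\<Phi> and l=l and Phis=Phis and xs="as @ bs", OF rs sub chain top] ne s t \<alpha>_def ps1_def ps2_def \<Psi>_def
      by (simp add: comp_def)
    have lamal: "lam \<alpha> = sum_list (map fst ps1) + sum_list (map fst ps2)"
      unfolding \<alpha>_def ps1_def ps2_def using lin by (simp add: linear_add lamsum comp_def)
    show ?thesis unfolding \<alpha>_def[symmetric] f_eq[of _ \<alpha>]
    proof (rule SUP_least)
      fix i
      have "vee3 l \<tau> \<tau>' (lam \<alpha>) i (jl Phis \<alpha>)
          \<le> nesum (map (\<lambda>p. \<tau> (fst p) i (snd p)) ps1) + nesum (map (\<lambda>p. \<tau>' (fst p) i (snd p)) ps2)"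
        unfolding lamal
      proof (rule mixed_le[where h="\<lambda>v j. vee3 l \<tau> \<tau>' v i j" and ga="\<lambda>v j. \<tau> v i j" and gb="\<lambda>v j. \<tau>' v i j"])
        show "\<And>v1 v2 j j1 j2. j1 \<le> l \<Longrightarrow> j2 \<le> l \<Longrightarrow> RR j j1 j2 \<Longrightarrow> vee3 l \<tau> \<tau>' (v1 + v2) i j \<le> \<tau> v1 i j1 + \<tau>' v2 i j2"
          by (rule vee_top)
        show "(\<forall>v1 v2 j j1 j2. j \<le> l \<longrightarrow> j1 \<le> l \<longrightarrow> j2 \<le> l \<longrightarrow> RR j j1 j2 \<longrightarrow> \<tau> (v1 + v2) i j \<le> \<tau> v1 i j1 + \<tau> v2 i j2) \<or> length ps1 = 1"
          using c1 concg[of \<tau> i] ps1_def by auto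
        show "(\<forall>v1 v2 j j1 j2. j \<le> l \<longrightarrow> j1 \<le> l \<longrightarrow> j2 \<le> l \<longrightarrow> RR j j1 j2 \<longrightarrow> \<tau>' (v1 + v2) i j \<le> \<tau>' v1 i j1 + \<tau>' v2 i j2) \<or> length ps2 = 1"
          using c2 concg[of \<tau>' i] ps2_def by auto
        show "ps1 \<noteq> []" "ps2 \<noteq> []" using ne ps1_def ps2_def by auto
        show "\<And>p. p \<in> set ps1 \<Longrightarrow> snd p \<le> l" using ps_l[OF s(1)] ps1_def by blast
        show "\<And>p. p \<in> set ps2 \<Longrightarrow> snd p \<le> l" using ps_l[OF s(2)] ps2_def by blast
        show "QQ (map snd ps1 @ map snd ps2) (jl Phis \<alpha>)" by (rule q)
      qed
      also have "\<dots> \<le> nesum (map (f_tau l Phis lam \<tau>) as) + nesum (map (f_tau l Phis lam \<tau>') bs)"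
        unfolding ps1_def ps2_def by (intro add_mono nes ne)
      finally show "vee3 l \<tau> \<tau>' (lam \<alpha>) i (jl Phis \<alpha>) \<le> nesum (map (f_tau l Phis lam \<tau>) as) + nesum (map (f_tau l Phis lam \<tau>') bs)" .
    qed
  qed
  have P1: "concave_fun \<Psi> (f_tau l Phis lam \<tau>)" if cv: "concave3 l \<tau>"
    unfolding concave_fun_def
  proof (intro allI impI)
    fix as assume ne: "as \<noteq> []" and s: "set as \<subseteq> \<Psi>" and t: "sum_list as \<in> \<Psi>"
    define ps1 where "ps1 = map (\<lambda>a. (lam a, jl Phis a)) as"
    have q: "QQ (map snd ps1) (jl Phis (sum_list as))"
      using RC[where \<Phi>=\<Phi> and l=l and Phis=Phis and xs=as, OF rs sub chain top] ne s t ps1_def \<Psi>_def by (simp add: comp_def)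
    have lamal: "lam (sum_list as) = sum_list (map fst ps1)"
      unfolding ps1_def by (simp add: lamsum comp_def)
    show "f_tau l Phis lam \<tau> (sum_list as) \<le> nesum (map (f_tau l Phis lam \<tau>) as)"
      unfolding f_eq[of _ "sum_list as"]
    proof (rule SUP_least)
      fix i
      have "\<tau> (lam (sum_list as)) i (jl Phis (sum_list as)) \<le> nesum (map (\<lambda>p. \<tau> (fst p) i (snd p)) ps1)"
        unfolding lamal
      proof (rule chain_le'[where g="\<lambda>v j. \<tau> v i j" and ps=ps1])
        show "(\<forall>v1 v2 j j1 j2. j \<le> l \<longrightarrow> j1 \<le> l \<longrightarrow> j2 \<le> l \<longrightarrow> RR j j1 j2 \<longrightarrow> \<tau> (v1 + v2) i j \<le> \<tau> v1 i j1 + \<tau> v2 i j2) \<or> length ps1 = 1"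
          using concg[OF cv, of i] by blast
        show "ps1 \<noteq> []" using ne ps1_def by simp
        show "\<And>p. p \<in> set ps1 \<Longrightarrow> snd p \<le> l" using ps_l[OF s] ps1_def by blast
        show "QQ (map snd ps1) (jl Phis (sum_list as))" by (rule q)
      qed
      also have "\<dots> \<le> nesum (map (f_tau l Phis lam \<tau>) as)" unfolding ps1_def by (rule nes[OF ne])
      finally show "\<tau> (lam (sum_list as)) i (jl Phis (sum_list as)) \<le> nesum (map (f_tau l Phis lam \<tau>) as)" .
    qed
  qed
  have P2: "f_tau l Phis lam (vee3 l \<tau> \<tau>') \<alpha> \<le> bowtie \<Psi> (f_tau l Phis lam \<tau>) (f_tau l Phis lam \<tau>') \<alpha>" if al: "\<alpha> \<in> \<Psi>" for \<alpha>
    unfolding bowtie_def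
  proof (rule Inf_greatest)
    fix x assume "x \<in> {f_tau l Phis lam \<tau> a + f_tau l Phis lam \<tau>' a' |a a'. a \<in> \<Psi> \<and> a' \<in> \<Psi> \<and> a + a' = \<alpha>}"
    then obtain a a' where aa: "x = f_tau l Phis lam \<tau> a + f_tau l Phis lam \<tau>' a'" "a \<in> \<Psi>" "a' \<in> \<Psi>" "a + a' = \<alpha>" by blast
    show "f_tau l Phis lam (vee3 l \<tau> \<tau>') \<alpha> \<le> x"
      using G[of "[a]" "[a']"] aa al by simp
  qed
  have P3: "f_tau l Phis lam (vee3 l \<tau> \<tau>') \<alpha> \<le> rtimes \<Psi> (f_tau l Phis lam \<tau>) (f_tau l Phis lam \<tau>') \<alpha>"
    if cv: "concave3 l \<tau>" and al: "\<alpha> \<in> \<Psi>" for \<alpha>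
    unfolding rtimes_def
  proof (rule Inf_greatest)
    fix x assume "x \<in> {nesum (map (f_tau l Phis lam \<tau>) as) + f_tau l Phis lam \<tau>' a' |as a'.
      as \<noteq> [] \<and> set as \<subseteq> \<Psi> \<and> a' \<in> \<Psi> \<and> sum_list as + a' = \<alpha>}"
    then obtain as a' where aa: "x = nesum (map (f_tau l Phis lam \<tau>) as) + f_tau l Phis lam \<tau>' a'"
      "as \<noteq> []" "set as \<subseteq> \<Psi>" "a' \<in> \<Psi>" "sum_list as + a' = \<alpha>" by blast
    show "f_tau l Phis lam (vee3 l \<tau> \<tau>') \<alpha> \<le> x"
      using G[of as "[a']"] aa cv al by simp
  qed
  have P4: "f_tau l Phis lam (vee3 l \<tau> \<tau>') \<alpha> \<le> curlyvee \<Psi> (f_tau l Phis lam \<tau>) (f_tau l Phis lam \<tau>') \<alpha>"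
    if cv: "concave3 l \<tau>" "concave3 l \<tau>'" and al: "\<alpha> \<in> \<Psi>" for \<alpha>
    unfolding curlyvee_def
  proof (rule Inf_greatest)
    fix x assume "x \<in> {nesum (map (f_tau l Phis lam \<tau>) as) + nesum (map (f_tau l Phis lam \<tau>') bs) |as bs.
      as \<noteq> [] \<and> bs \<noteq> [] \<and> set as \<subseteq> \<Psi> \<and> set bs \<subseteq> \<Psi> \<and> sum_list as + sum_list bs = \<alpha>}"
    then obtain as bs where aa: "x = nesum (map (f_tau l Phis lam \<tau>) as) + nesum (map (f_tau l Phis lam \<tau>') bs)"
      "as \<noteq> []" "bs \<noteq> []" "set as \<subseteq> \<Psi>" "set bs \<subseteq> \<Psi>" "sum_list as + sum_list bs = \<alpha>" by blast
    show "f_tau l Phis lam (vee3 l \<tau> \<tau>') \<alpha> \<le> x"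
      using G[of as bs] aa cv al by simp
  qed
  show ?thesis using P1 P2 P3 P4 by blast
qed


end
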